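(* Let $G$ be a fullerene graph and $S$ a perfect star packing of $G$. Then each hexagonal face of $G$ contains at most two vertices of $C(S)$. Moreover, if a hexagonal face $h$ contains two vertices of $C(S)$, then these two vertices are antipodal on $h$ (i.e. at distance $3$ along the $6$-cycle $h$).
   Context: A fullerene graph is a finite simple connected (equivalently, $3$-connected) plane cubic graph all of whose faces are pentagons or hexagons. A perfect star packing of $G$ is a spanning subgraph $S$ of $G$ every connected component of which is isomorphic to $K_{1,3}$; $C(S)$ denotes the set of centers (degree-$3$ vertices) of the stars in $S$. *)

theory Defs
  imports Main
begin

definition simple_graph :: "'a set \<Rightarrow> ('a \<Rightarrow> 'a \<Rightarrow> bool) \<Rightarrow> bool" where
  "simple_graph V E \<longleftrightarrow> finite V \<and>
     (\<forall>u v. E u v \<longrightarrow> u \<in> V \<and> v \<in> V \<and> u \<noteq> v \<and> E v u)"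

definition graph_connected :: "'a set \<Rightarrow> ('a \<Rightarrow> 'a \<Rightarrow> bool) \<Rightarrow> bool" where
  "graph_connected V E \<longleftrightarrow> V \<noteq> {} \<and> (\<forall>u\<in>V. \<forall>v\<in>V. E\<^sup>*\<^sup>* u v)"

definition cubic :: "'a set \<Rightarrow> ('a \<Rightarrow> 'a \<Rightarrow> bool) \<Rightarrow> bool" where
  "cubic V E \<longleftrightarrow> (\<forall>v\<in>V. card {u. E v u} = 3)"

definition darts :: "('a \<Rightarrow> 'a \<Rightarrow> bool) \<Rightarrow> ('a \<times> 'a) set" where
  "darts E = {(u, v). E u v}"

definition rotation_system :: "'a set \<Rightarrow> ('a \<Rightarrow> 'a \<Rightarrow> bool) \<Rightarrow> ('a \<Rightarrow> 'a \<Rightarrow> 'a) \<Rightarrow> bool" where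
  "rotation_system V E rho \<longleftrightarrow>
     (\<forall>v\<in>V. \<forall>u. E v u \<longrightarrow> E v (rho v u) \<and> (\<forall>w. E v w \<longrightarrow> (\<exists>k. (rho v ^^ k) u = w)))"

text \<open>Face-tracing permutation on darts and faces (orbits) of the embedding.\<close>
definition face_succ :: "('a \<Rightarrow> 'a \<Rightarrow> 'a) \<Rightarrow> 'a \<times> 'a \<Rightarrow> 'a \<times> 'a" where
  "face_succ rho d = (snd d, rho (snd d) (fst d))"

definition face_of :: "('a \<Rightarrow> 'a \<Rightarrow> 'a) \<Rightarrow> 'a \<times> 'a \<Rightarrow> ('a \<times> 'a) set" where
  "face_of rho d = {(face_succ rho ^^ k) d | k. True}"

definition faces :: "('a \<Rightarrow> 'a \<Rightarrow> bool) \<Rightarrow> ('a \<Rightarrow> 'a \<Rightarrow> 'a) \<Rightarrow> ('a \<times> 'a) set set" where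
  "faces E rho = face_of rho ` darts E"

definition face_vertices :: "('a \<times> 'a) set \<Rightarrow> 'a set" where
  "face_vertices f = fst ` f"

text \<open>A plane (genus 0) embedding of a connected graph, given combinatorially by a rotation
  system satisfying Euler's formula V - E + F = 2.\<close>
definition plane_embedding :: "'a set \<Rightarrow> ('a \<Rightarrow> 'a \<Rightarrow> bool) \<Rightarrow> ('a \<Rightarrow> 'a \<Rightarrow> 'a) \<Rightarrow> bool" where
  "plane_embedding V E rho \<longleftrightarrow> rotation_system V E rho \<and>
     int (card V) - int (card (darts E) div 2) + int (card (faces E rho)) = 2"

definition fullerene :: "'a set \<Rightarrow> ('a \<Rightarrow> 'a \<Rightarrow> bool) \<Rightarrow> ('a \<Rightarrow> 'a \<Rightarrow> 'a) \<Rightarrow> bool" where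
  "fullerene V E rho \<longleftrightarrow> simple_graph V E \<and> graph_connected V E \<and> cubic V E \<and>
     plane_embedding V E rho \<and> (\<forall>f\<in>faces E rho. card f = 5 \<or> card f = 6)"

definition is_K13 :: "'a set \<Rightarrow> ('a \<Rightarrow> 'a \<Rightarrow> bool) \<Rightarrow> bool" where
  "is_K13 C S \<longleftrightarrow> (\<exists>c a b d. C = {c, a, b, d} \<and> distinct [c, a, b, d] \<and>
     (\<forall>x\<in>C. \<forall>y\<in>C. S x y \<longleftrightarrow> (x = c \<and> y \<in> {a, b, d}) \<or> (y = c \<and> x \<in> {a, b, d})))"

definition perfect_star_packing :: "'a set \<Rightarrow> ('a \<Rightarrow> 'a \<Rightarrow> bool) \<Rightarrow> ('a \<Rightarrow> 'a \<Rightarrow> bool) \<Rightarrow> bool" where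
  "perfect_star_packing V E S \<longleftrightarrow> (\<forall>u v. S u v \<longrightarrow> E u v) \<and> (\<forall>u v. S u v \<longrightarrow> S v u) \<and>
     (\<forall>v\<in>V. is_K13 {w. S\<^sup>*\<^sup>* v w} S)"

definition star_centers :: "'a set \<Rightarrow> ('a \<Rightarrow> 'a \<Rightarrow> bool) \<Rightarrow> 'a set" where
  "star_centers V S = {v\<in>V. card {u. S v u} = 3}"

end

theory Submission
  imports Defs
begin

lemma center_all:
  assumes "simple_graph V E" "cubic V E" "perfect_star_packing V E S"
    "c \<in> star_centers V S" "E c u"
  shows "S c u"
proof -
  have cV: "c \<in> V" and c3: "card {u. S c u} = 3" using assms(4) by (auto simp: star_centers_def)
  have sub: "{u. S c u} \<subseteq> {u. E c u}" using assms(3) by (auto simp: perfect_star_packing_def)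
  have fin: "finite {u. E c u}"
    using assms(1) by (auto simp: simple_graph_def intro: finite_subset[of _ V])
  have "card {u. E c u} = 3" using assms(2) cV by (auto simp: cubic_def)
  then have "{u. S c u} = {u. E c u}" using card_subset_eq[OF fin sub] c3 by simp
  then show ?thesis using assms(5) by blast
qed

lemma comp_center:
  assumes "is_K13 K S" "\<And>x u. x \<in> K \<Longrightarrow> S x u \<Longrightarrow> u \<in> K"
    "x \<in> K" "y \<in> K" "card {u. S x u} = 3" "card {u. S y u} = 3"
  shows "x = y"
proof -
  obtain c a b d where K: "K = {c, a, b, d}" "distinct [c, a, b, d]"
    and iff: "\<forall>x\<in>K. \<forall>y\<in>K. S x y \<longleftrightarrow> (x = c \<and> y \<in> {a, b, d}) \<or> (y = c \<and> x \<in> {a, b, d})"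
    using assms(1) unfolding is_K13_def by blast
  have cK: "c \<in> K" using K by simp
  have *: "z = c" if "z \<in> K" "card {u. S z u} = 3" for z
  proof (rule ccontr)
    assume "z \<noteq> c"
    then have zl: "z \<in> {a,b,d}" using that K by auto
    have "{u. S z u} = {c}"
    proof
      show "{u. S z u} \<subseteq> {c}"
      proof
        fix u assume "u \<in> {u. S z u}"
        then have "S z u" "u \<in> K" using assms(2) that by auto
        then show "u \<in> {c}" using iff that(1) \<open>z \<noteq> c\<close> by blast
      qed
      show "{c} \<subseteq> {u. S z u}" using iff that(1) cK zl by blast
    qed
    then show False using that(2) by simp
  qed
  show ?thesis using *[OF assms(3,5)] *[OF assms(4,6)] by simp
qed

lemma same_comp:
  assumes "perfect_star_packing V E S" "c1 \<in> star_centers V S" "c2 \<in> star_centers V S"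
    "S\<^sup>*\<^sup>* c1 c2"
  shows "c1 = c2"
proof -
  let ?K = "{w. S\<^sup>*\<^sup>* c1 w}"
  have "c1 \<in> V" using assms(2) by (simp add: star_centers_def)
  then have "is_K13 ?K S" using assms(1) by (simp add: perfect_star_packing_def)
  moreover have "\<And>x u. x \<in> ?K \<Longrightarrow> S x u \<Longrightarrow> u \<in> ?K" by auto
  ultimately show ?thesis
    using comp_center[of ?K S c1 c2] assms(2-4) by (auto simp: star_centers_def)
qed

lemma not_adj:
  assumes "simple_graph V E" "cubic V E" "perfect_star_packing V E S"
    "x \<in> star_centers V S" "y \<in> star_centers V S" "E x y"
  shows False
proof -
  have "S x y" using center_all assms by metis
  then have "x = y" using same_comp[OF assms(3-5)] by auto
  then show False using assms(1,6) by (auto simp: simple_graph_def)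
qed

lemma common_nb:
  assumes "simple_graph V E" "cubic V E" "perfect_star_packing V E S"
    "x \<in> star_centers V S" "y \<in> star_centers V S" "E x u" "E y u"
  shows "x = y"
proof -
  have "S x u" "S y u" using center_all assms by metis+
  then have "S u y" using assms(3) by (auto simp: perfect_star_packing_def)
  with \<open>S x u\<close> have "S\<^sup>*\<^sup>* x y" by auto
  then show ?thesis using same_comp[OF assms(3-5)] by auto
qed

lemma funpow_cancel:
  assumes "inj_on f D" "\<And>k. (f ^^ k) d0 \<in> D" "(f ^^ a) d0 = (f ^^ (a + p)) d0"
  shows "(f ^^ p) d0 = d0"
  using assms(3)
proof (induction a)
  case 0 then show ?case by simp
next
  case (Suc a)
  have "f ((f ^^ a) d0) = f ((f ^^ (a + p)) d0)" using Suc.prems by simp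
  then have "(f ^^ a) d0 = (f ^^ (a + p)) d0"
    using assms(1) assms(2)[of a] assms(2)[of "a+p"] by (auto dest: inj_onD)
  then show ?case using Suc.IH by simp
qed

lemma funpow_period_mult:
  assumes "(f ^^ p) d0 = d0"
  shows "(f ^^ (p * q)) d0 = d0"
proof (induction q)
  case 0 then show ?case by simp
next
  case (Suc q)
  have "(f ^^ (p * Suc q)) d0 = (f ^^ (p * q)) ((f ^^ p) d0)"
    by (metis comp_apply funpow_add mult_Suc_right add.commute)
  then show ?case using Suc assms by simp
qed

lemma funpow_mod:
  assumes "(f ^^ p) d0 = d0"
  shows "(f ^^ k) d0 = (f ^^ (k mod p)) d0"
proof -
  have "(f ^^ k) d0 = (f ^^ (k mod p)) ((f ^^ (p * (k div p))) d0)"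
    by (metis comp_apply funpow_add mod_mult_div_eq mult.commute)
  then show ?thesis using funpow_period_mult[OF assms] by simp
qed

lemma orbit_period:
  assumes "inj_on f D" "\<And>k. (f ^^ k) d0 \<in> D"
    "card {(f ^^ k) d0 | k. True} = n" "n > 0"
  shows "(f ^^ n) d0 = d0"
proof -
  let ?O = "{(f ^^ k) d0 | k. True}"
  have fin: "finite ?O" using assms(3,4) card_ge_0_finite by blast
  have "(\<lambda>k. (f ^^ k) d0) ` {..n} \<subseteq> ?O" by auto
  then have "card ((\<lambda>k. (f ^^ k) d0) ` {..n}) \<le> n" using card_mono[OF fin] assms(3) by fastforce
  then have "\<not> inj_on (\<lambda>k. (f ^^ k) d0) {..n}" using card_image by fastforce
  then obtain a b where ab: "a \<le> n" "b \<le> n" "a \<noteq> b" "(f ^^ a) d0 = (f ^^ b) d0"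
    unfolding inj_on_def by auto
  then obtain a p where ap: "p > 0" "a + p \<le> n" "(f ^^ a) d0 = (f ^^ (a + p)) d0"
    by (metis add_diff_inverse_nat linorder_neqE_nat not_less_iff_gr_or_eq zero_less_diff)
  have per: "(f ^^ p) d0 = d0" using funpow_cancel[OF assms(1,2) ap(3)] .
  have "?O \<subseteq> (\<lambda>k. (f ^^ k) d0) ` {..<p}"
  proof
    fix x assume "x \<in> ?O"
    then obtain k where "x = (f ^^ k) d0" by auto
    then have "x = (f ^^ (k mod p)) d0" using funpow_mod[OF per] by simp
    then show "x \<in> (\<lambda>k. (f ^^ k) d0) ` {..<p}" using ap(1) by auto
  qed
  then have "card ?O \<le> card ((\<lambda>k. (f ^^ k) d0) ` {..<p})"
    by (intro card_mono) auto
  then have "n \<le> p" using assms(3) card_image_le[of "{..<p}" "\<lambda>k. (f ^^ k) d0"] by simp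
  then have "p = n" using ap by simp
  then show ?thesis using per by simp
qed

lemma rho_surj:
  assumes "simple_graph V E" "rotation_system V E rho" "E v w"
  shows "\<exists>z. E v z \<and> rho v z = w"
proof -
  have vV: "v \<in> V" using assms(1,3) by (auto simp: simple_graph_def)
  have st: "\<And>u. E v u \<Longrightarrow> E v (rho v u)" using assms(2) vV by (auto simp: rotation_system_def)
  have "E v (rho v w)" using st assms(3) .
  then obtain k where k: "(rho v ^^ k) (rho v w) = w"
    using assms(2,3) vV unfolding rotation_system_def by blast
  have it: "E v ((rho v ^^ n) w)" for n by (induction n) (auto simp: st assms(3))
  show ?thesis using it[of k] k by (metis funpow_Suc_right funpow_swap1 o_apply)
qed

lemma rho_inj:
  assumes "simple_graph V E" "rotation_system V E rho"
  shows "inj_on (rho v) {u. E v u}"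
proof (cases "v \<in> V")
  case True
  have fin: "finite {u. E v u}"
    using assms(1) by (auto simp: simple_graph_def intro: finite_subset[of _ V])
  have "rho v ` {u. E v u} = {u. E v u}"
  proof
    show "rho v ` {u. E v u} \<subseteq> {u. E v u}" using assms(2) True by (auto simp: rotation_system_def)
    show "{u. E v u} \<subseteq> rho v ` {u. E v u}" using rho_surj[OF assms] by blast
  qed
  then show ?thesis using eq_card_imp_inj_on[OF fin, of "rho v"] by simp
next
  case False
  then have "{u. E v u} = {}" using assms(1) by (auto simp: simple_graph_def)
  then show ?thesis by simp
qed

lemma fs_inj:
  assumes "simple_graph V E" "rotation_system V E rho"
  shows "inj_on (face_succ rho) (darts E)"
proof (rule inj_onI)
  fix d1 d2 assume d: "d1 \<in> darts E" "d2 \<in> darts E" "face_succ rho d1 = face_succ rho d2"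
  obtain a b a' b' where ab: "d1 = (a, b)" "d2 = (a', b')" by fastforce
  have e: "E a b" "E a' b'" using d ab by (auto simp: darts_def)
  have bb: "b = b'" and r: "rho b a = rho b a'" using d(3) ab by (auto simp: face_succ_def)
  have "E b a" "E b a'" using e bb assms(1) by (auto simp: simple_graph_def)
  then have "a = a'" using rho_inj[OF assms, of b] r by (auto dest: inj_onD)
  then show "d1 = d2" using ab bb by simp
qed

lemma fs_darts:
  assumes "simple_graph V E" "rotation_system V E rho" "d \<in> darts E"
  shows "face_succ rho d \<in> darts E"
proof -
  obtain a b where ab: "d = (a, b)" by fastforce
  have "E a b" using assms(3) ab by (simp add: darts_def)
  then have "E b a" "b \<in> V" using assms(1) by (auto simp: simple_graph_def)
  then have "E b (rho b a)" using assms(2) by (auto simp: rotation_system_def)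
  then show ?thesis using ab by (simp add: darts_def face_succ_def)
qed

theorem mainTheorem4:
  fixes V :: "'a set" and E S :: "'a \<Rightarrow> 'a \<Rightarrow> bool" and rho :: "'a \<Rightarrow> 'a \<Rightarrow> 'a"
    and h :: "('a \<times> 'a) set"
  assumes "fullerene V E rho"
    and "perfect_star_packing V E S"
    and "h \<in> faces E rho" and "card h = 6"
  shows "card (face_vertices h \<inter> star_centers V S) \<le> 2 \<and>
    (\<forall>x y. x \<in> face_vertices h \<inter> star_centers V S \<longrightarrow> y \<in> face_vertices h \<inter> star_centers V S
       \<longrightarrow> x \<noteq> y \<longrightarrow> (\<exists>d\<in>h. fst d = x \<and> fst ((face_succ rho ^^ 3) d) = y))"
proof -
  let ?f = "face_succ rho"
  have sg: "simple_graph V E" and cu: "cubic V E" and rs: "rotation_system V E rho"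
    using assms(1) by (auto simp: fullerene_def plane_embedding_def)
  have sym: "\<And>a b. E a b \<Longrightarrow> E b a" using sg by (auto simp: simple_graph_def)
  obtain d0 where d0: "d0 \<in> darts E" "h = face_of rho d0" using assms(3) by (auto simp: faces_def)
  have hO: "h = {(?f ^^ k) d0 | k. True}" using d0 by (simp add: face_of_def)
  have inD: "(?f ^^ k) d0 \<in> darts E" for k
    by (induction k) (auto simp: d0 fs_darts[OF sg rs])
  have per: "(?f ^^ 6) d0 = d0"
    using orbit_period[OF fs_inj[OF sg rs] inD, of 6] hO assms(4) by simp
  define w where "w k = fst ((?f ^^ k) d0)" for k
  have adj: "E (w k) (w (Suc k))" for k
  proof -
    obtain a b where ab: "(?f ^^ k) d0 = (a, b)" by fastforce
    have "E a b" using inD[of k] ab by (simp add: darts_def)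
    moreover have "w (Suc k) = b" using ab by (simp add: w_def face_succ_def)
    ultimately show ?thesis using ab by (simp add: w_def)
  qed
  have wmod: "w k = w (k mod 6)" for k
    unfolding w_def using funpow_mod[OF per] by metis
  have fv: "face_vertices h = range w" using hO by (auto simp: face_vertices_def w_def)
  have key: "y = w (i + 3)" if xc: "w i \<in> star_centers V S" and yc: "w j \<in> star_centers V S"
    and ne: "w i \<noteq> w j" and yj: "y = w j" for i j y
  proof -
    define m where "m = (j + 5 * i) mod 6"
    have "(i + m) mod 6 = j mod 6" unfolding m_def by presburger
    then have wj: "w j = w (i + m)" using wmod by metis
    have w6: "w (i + 6) = w i" using wmod by (metis mod_add_self2)
    have "m < 6" unfolding m_def by simp
    then have "m = 0 \<or> m = 1 \<or> m = 2 \<or> m = 3 \<or> m = 4 \<or> m = 5" by arith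
    moreover {
      assume "m = 0" then have False using ne wj by simp }
    moreover {
      assume "m = 1" then have False using not_adj[OF sg cu assms(2) xc yc] adj[of i] wj by simp }
    moreover {
      assume m: "m = 2"
      have "E (w i) (w (i+1))" using adj[of i] by simp
      moreover have "E (w j) (w (i+1))" using adj[of "i+1"] wj m sym by (simp add: numeral_2_eq_2)
      ultimately have False using common_nb[OF sg cu assms(2) xc yc] ne by blast }
    moreover {
      assume m: "m = 4"
      have "E (w i) (w (i+5))" using adj[of "i+5"] w6 sym by (simp add: eval_nat_numeral)
      moreover have "E (w j) (w (i+5))" using adj[of "i+4"] wj m by (simp add: eval_nat_numeral)
      ultimately have False using common_nb[OF sg cu assms(2) xc yc] ne by blast }
    moreover {
      assume m: "m = 5"
      have "E (w j) (w i)" using adj[of "i+5"] w6 wj m by (simp add: eval_nat_numeral)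
      then have False using not_adj[OF sg cu assms(2) yc xc] by blast }
    ultimately show ?thesis using wj yj by auto
  qed
  let ?A = "face_vertices h \<inter> star_centers V S"
  have part1: "card ?A \<le> 2"
  proof (cases "?A = {}")
    case True then show ?thesis by simp
  next
    case False
    then obtain i where xi: "w i \<in> ?A" using fv by auto
    have "?A \<subseteq> {w i, w (i + 3)}"
    proof
      fix y assume "y \<in> ?A"
      then obtain j where "y = w j" "w j \<in> star_centers V S" using fv by auto
      then show "y \<in> {w i, w (i + 3)}" using key[of i j y] xi by (cases "w i = w j") auto
    qed
    then have "card ?A \<le> card {w i, w (i + 3)}" by (intro card_mono) auto
    also have "\<dots> \<le> 2" by (cases "w i = w (i + 3)") auto
    finally show ?thesis .
  qed
  have part2: "\<exists>d\<in>h. fst d = x \<and> fst ((?f ^^ 3) d) = y"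
    if "x \<in> ?A" "y \<in> ?A" "x \<noteq> y" for x y
  proof -
    have "x \<in> range w" "y \<in> range w" using that(1,2) fv by auto
    then obtain i j where xi: "x = w i" and yj: "y = w j" by blast
    have "y = w (i + 3)" using key[of i j y] that xi yj by auto
    moreover have "fst ((?f ^^ 3) ((?f ^^ i) d0)) = w (i + 3)"
      unfolding w_def by (metis funpow_add o_apply add.commute)
    moreover have "(?f ^^ i) d0 \<in> h" using hO by blast
    ultimately show ?thesis using xi by (metis w_def)
  qed
  show ?thesis using part1 part2 by blast
qed

end
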